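(* Let $G$ be a finitely generated free abelian group and $g,h\in G$ such that the subgroup $\langle g,h\rangle$ has rank $2$. Then for any choice of signs, $1\pm g$ and $1\pm h$ are relatively prime in the group ring $\mathbb{Z}[G]$.
   Context: $\mathbb{Z}[G]$ is the integral group ring of $G$ (a unique factorization domain); relatively prime means having no common non-unit factor. *)

theory Defs
  imports "HOL-Analysis.Analysis" "HOL-Library.Poly_Mapping"
begin

text \<open>The finitely generated free abelian group is modelled as \<open>int ^ 'n\<close> (written additively),
  \<open>'n\<close> an arbitrary finite index type. The integral group ring \<open>\<int>[G]\<close> is the ring of finitely
  supported functions \<open>G \<Rightarrow>\<^sub>0 int\<close> with convolution product (library \<open>poly_mapping\<close>).\<close>

type_synonym 'n grp_ring = "(int ^ 'n) \<Rightarrow>\<^sub>0 int"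

definition grp_elem :: "int ^ 'n \<Rightarrow> 'n grp_ring" where
  "grp_elem g = Poly_Mapping.single g 1"

text \<open>The subgroup generated by \<open>g, h\<close> has rank 2 iff \<open>g, h\<close> are \<int>-linearly independent.\<close>
definition rank2_pair :: "int ^ 'n \<Rightarrow> int ^ 'n \<Rightarrow> bool" where
  "rank2_pair g h \<longleftrightarrow> (\<forall>a b :: int. a *s g + b *s h = 0 \<longrightarrow> a = 0 \<and> b = 0)"

text \<open>Relatively prime: no common non-unit factor (the library's \<open>coprime\<close> needs
  \<open>algebraic_semidom\<close>, which \<open>poly_mapping\<close> is not registered as).\<close>
definition rel_prime :: "'a::comm_semiring_1 \<Rightarrow> 'a \<Rightarrow> bool" where
  "rel_prime a b \<longleftrightarrow> (\<forall>c. c dvd a \<longrightarrow> c dvd b \<longrightarrow> c dvd 1)"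

end

theory Submission imports Defs "HOL-Library.List_Lexorder" begin

lemma lookup_mult_pairs:
  "Poly_Mapping.lookup (f * g) k = (\<Sum>(a, b). Poly_Mapping.lookup f a * Poly_Mapping.lookup g b when k = a + b)"
  by transfer (simp add: prod_fun_unfold_prod)

lemma K_mono:
  fixes K :: "'a::ab_semigroup_add \<Rightarrow> 'b::linorder"
  assumes add: "\<And>a b c. K a < K b \<Longrightarrow> K (a + c) < K (b + c)" and inj: "inj K"
    and "K a \<le> K a0" "K b \<le> K b0"
  shows "K (a + b) \<le> K (a0 + b0)" and "(a, b) \<noteq> (a0, b0) \<Longrightarrow> K (a + b) < K (a0 + b0)"
proof -
  have s1: "K (a + b) \<le> K (a0 + b)"
    using assms(3) add[of a a0 b] by (cases "a = a0") (auto simp: inj_eq[OF inj] order_le_less)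
  have s2: "K (a0 + b) \<le> K (a0 + b0)"
    using assms(4) add[of b b0 a0] by (cases "b = b0") (auto simp: inj_eq[OF inj] order_le_less add.commute)
  show "K (a + b) \<le> K (a0 + b0)" using s1 s2 by simp
  assume ne: "(a, b) \<noteq> (a0, b0)"
  show "K (a + b) < K (a0 + b0)"
  proof (cases "a = a0")
    case True
    then have "b \<noteq> b0" using ne by simp
    then have "K b < K b0" using assms(4) inj by (metis injD order_le_less)
    then show ?thesis using add[of b b0 a0] True by (simp add: add.commute)
  next
    case False
    then have "K a < K a0" using assms(3) inj by (metis injD order_le_less)
    then show ?thesis using add[of a a0 b] s2 by simp
  qed
qed

lemma top_mult:
  fixes K :: "'a::comm_monoid_add \<Rightarrow> 'b::linorder" and f g :: "'a \<Rightarrow>\<^sub>0 int"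
  assumes add: "\<And>a b c. K a < K b \<Longrightarrow> K (a + c) < K (b + c)" and inj: "inj K"
    and fa: "\<forall>a\<in>Poly_Mapping.keys f. K a \<le> K a0" and gb: "\<forall>b\<in>Poly_Mapping.keys g. K b \<le> K b0"
    and a0: "a0 \<in> Poly_Mapping.keys f" and b0: "b0 \<in> Poly_Mapping.keys g"
  shows "Poly_Mapping.lookup (f * g) (a0 + b0) = Poly_Mapping.lookup f a0 * Poly_Mapping.lookup g b0"
    and "\<forall>x\<in>Poly_Mapping.keys (f * g). K x \<le> K (a0 + b0)"
proof -
  have "(\<Sum>(a, b). Poly_Mapping.lookup f a * Poly_Mapping.lookup g b when a0 + b0 = a + b)
      = (\<Sum>ab. (case ab of (a, b) \<Rightarrow> Poly_Mapping.lookup f a * Poly_Mapping.lookup g b) when (a0, b0) = ab)"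
  proof (rule Sum_any.cong)
    fix ab :: "'a \<times> 'a"
    obtain a b where ab: "ab = (a, b)" by (cases ab)
    show "(case ab of (a, b) \<Rightarrow> Poly_Mapping.lookup f a * Poly_Mapping.lookup g b when a0 + b0 = a + b) =
          ((case ab of (a, b) \<Rightarrow> Poly_Mapping.lookup f a * Poly_Mapping.lookup g b) when (a0, b0) = ab)"
    proof (cases "Poly_Mapping.lookup f a = 0 \<or> Poly_Mapping.lookup g b = 0")
      case True
      then show ?thesis by (auto simp: ab when_def)
    next
      case False
      then have "a \<in> Poly_Mapping.keys f" "b \<in> Poly_Mapping.keys g" by (auto simp: in_keys_iff)
      then have "K a \<le> K a0" "K b \<le> K b0" using fa gb by auto
      then have "(a, b) \<noteq> (a0, b0) \<Longrightarrow> a0 + b0 \<noteq> a + b"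
        using K_mono(2)[OF add inj] by (metis order_less_irrefl)
      then show ?thesis by (auto simp: ab when_def)
    qed
  qed
  also have "\<dots> = Poly_Mapping.lookup f a0 * Poly_Mapping.lookup g b0" by simp
  finally show "Poly_Mapping.lookup (f * g) (a0 + b0) = Poly_Mapping.lookup f a0 * Poly_Mapping.lookup g b0"
    by (simp add: lookup_mult_pairs)
  show "\<forall>x\<in>Poly_Mapping.keys (f * g). K x \<le> K (a0 + b0)"
  proof
    fix x assume "x \<in> Poly_Mapping.keys (f * g)"
    then obtain a b where "x = a + b" "a \<in> Poly_Mapping.keys f" "b \<in> Poly_Mapping.keys g" using keys_mult by blast
    then show "K x \<le> K (a0 + b0)" using K_mono(1)[OF add inj] fa gb by blast
  qed
qed


lemma ladd_less:
  fixes xs ys zs :: "int list"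
  shows "length xs = length zs \<Longrightarrow> length ys = length zs \<Longrightarrow> xs < ys \<Longrightarrow> map2 (+) xs zs < map2 (+) ys zs"
proof (induction xs arbitrary: ys zs)
  case Nil
  then show ?case by simp
next
  case (Cons x xs)
  then obtain y ys' z zs' where "ys = y # ys'" "zs = z # zs'"
    by (metis length_Suc_conv)
  then show ?case using Cons by auto
qed

lemma const_on_keys:
  fixes c u p :: "(int ^ 'n) \<Rightarrow>\<^sub>0 int" and phi :: "int ^ 'n \<Rightarrow> int"
  assumes cu: "c * u = p" and p0: "p \<noteq> 0" and pk: "\<forall>x\<in>Poly_Mapping.keys p. phi x = 0"
    and lin: "\<And>a b. phi (a + b) = phi a + phi b"
    and x: "x \<in> Poly_Mapping.keys c" and y: "y \<in> Poly_Mapping.keys c"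
  shows "phi x = phi y"
proof -
  obtain N and e :: "nat \<Rightarrow> 'n" where eN: "(UNIV :: 'n set) = e ` {i. i < N}"
    using finite_imp_nat_seg_image_inj_on[of "UNIV :: 'n set"] by auto
  have neg: "phi (- a) = - phi a" for a
    using lin[of a "-a"] lin[of 0 0] by simp
  define K :: "int ^ 'n \<Rightarrow> int list" where "K v = phi v # map (\<lambda>k. v $ e k) [0..<N]" for v
  have Kadd: "K (a + b) = map2 (+) (K a) (K b)" for a b
    by (simp add: K_def lin map2_map_map)
  have Klen: "length (K v) = Suc N" for v by (simp add: K_def)
  have Kinj: "inj K"
  proof (rule injI)
    fix a b assume "K a = K b"
    then have "\<forall>k<N. a $ e k = b $ e k" by (auto simp: K_def map_eq_conv)
    then show "a = b" unfolding vec_eq_iff by (metis (mono_tags) UNIV_I eN imageE mem_Collect_eq)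
  qed
  have Kmono: "K a < K b \<Longrightarrow> K (a + c) < K (b + c)" for a b c
    using ladd_less[of "K a" "K c" "K b"] by (simp add: Kadd Klen)
  define K' where "K' v = K (- v)" for v
  have K'inj: "inj K'" using Kinj unfolding K'_def inj_def by (metis neg_equal_iff_equal)
  have K'mono: "K' a < K' b \<Longrightarrow> K' (a + c) < K' (b + c)" for a b c
    using Kmono[of "-a" "-b" "-c"] by (simp add: K'_def add.commute)
  have Khd: "K a \<le> K b \<Longrightarrow> phi a \<le> phi b" for a b
    by (auto simp: K_def order_le_less)
  have c0: "c \<noteq> 0" and u0: "u \<noteq> 0" using cu p0 by auto
  have ex_max: "\<exists>a0\<in>Poly_Mapping.keys f. \<forall>a\<in>Poly_Mapping.keys f. L a \<le> L a0"
    if "f \<noteq> 0" for f :: "(int ^ 'n) \<Rightarrow>\<^sub>0 int" and L :: "int ^ 'n \<Rightarrow> int list"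
  proof -
    have ne: "L ` Poly_Mapping.keys f \<noteq> {}" "finite (L ` Poly_Mapping.keys f)" using that by auto
    then obtain a0 where "a0 \<in> Poly_Mapping.keys f" "L a0 = Max (L ` Poly_Mapping.keys f)"
      using Max_in by (metis imageE)
    then show ?thesis using ne by (metis Max_ge image_eqI)
  qed
  obtain a0 where a0: "a0 \<in> Poly_Mapping.keys c" "\<forall>a\<in>Poly_Mapping.keys c. K a \<le> K a0"
    using ex_max[OF c0] by blast
  obtain b0 where b0: "b0 \<in> Poly_Mapping.keys u" "\<forall>a\<in>Poly_Mapping.keys u. K a \<le> K b0"
    using ex_max[OF u0] by blast
  obtain a1 where a1: "a1 \<in> Poly_Mapping.keys c" "\<forall>a\<in>Poly_Mapping.keys c. K' a \<le> K' a1"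
    using ex_max[OF c0] by blast
  obtain b1 where b1: "b1 \<in> Poly_Mapping.keys u" "\<forall>a\<in>Poly_Mapping.keys u. K' a \<le> K' b1"
    using ex_max[OF u0] by blast
  have "Poly_Mapping.lookup p (a0 + b0) \<noteq> 0"
    using top_mult(1)[OF Kmono Kinj a0(2) b0(2) a0(1) b0(1)] a0(1) b0(1) cu by (simp add: in_keys_iff)
  then have s0: "phi a0 + phi b0 = 0" using pk lin in_keys_iff by metis
  have "Poly_Mapping.lookup p (a1 + b1) \<noteq> 0"
    using top_mult(1)[OF K'mono K'inj a1(2) b1(2) a1(1) b1(1)] a1(1) b1(1) cu by (simp add: in_keys_iff)
  then have s1: "phi a1 + phi b1 = 0" using pk lin in_keys_iff by metis
  have bnd: "phi a1 \<le> phi z \<and> phi z \<le> phi a0" if "z \<in> Poly_Mapping.keys c" for z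
    using Khd[of z a0] Khd[of "-z" "-a1"] a0(2) a1(2) that by (auto simp: K'_def neg)
  have "phi b1 \<le> phi b0"
    using Khd[of "-b0" "-b1"] b1(2) b0(1) by (auto simp: K'_def neg)
  moreover have "phi a1 \<le> phi a0" using bnd[OF a0(1)] by simp
  ultimately have "phi a1 = phi a0" using s0 s1 by simp
  then show ?thesis using bnd[OF x] bnd[OF y] by simp
qed


lemma par_zero:
  fixes g h d :: "int ^ 'n"
  assumes rk: "rank2_pair g h" and G: "\<forall>i j. g$i*d$j = g$j*d$i" and H: "\<forall>i j. h$i*d$j = h$j*d$i"
  shows "d = 0"
proof (rule ccontr)
  assume "d \<noteq> 0"
  then obtain i where di: "d$i \<noteq> 0" by (auto simp: vec_eq_iff)
  have "(h$i) *s g + (-(g$i)) *s h = 0"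
  proof (subst vec_eq_iff, intro allI)
    fix j
    have "d$i * (h$i * g$j - g$i * h$j) = h$i * (g$j*d$i) - g$i * (h$j*d$i)"
      by (simp add: algebra_simps)
    also have "\<dots> = h$i * (g$i*d$j) - g$i * (h$i*d$j)"
      using G[rule_format, of i j] H[rule_format, of i j] by simp
    also have "\<dots> = 0" by (simp add: algebra_simps)
    finally have "h$i * g$j - g$i * h$j = 0" using di by simp
    then show "((h$i) *s g + (-(g$i)) *s h) $ j = 0 $ j" by simp
  qed
  then have "h$i = 0 \<and> -(g$i) = 0" using rk unfolding rank2_pair_def by blast
  then have gi: "g$i = 0" by simp
  have "g = 0"
    unfolding vec_eq_iff
  proof
    fix j
    have "g$j * d$i = 0" using G[rule_format, of i j] gi by simp
    then show "g$j = 0$j" using di by simp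
  qed
  then have "(1::int) *s g + 0 *s h = 0" by simp
  then have "(1::int) = 0 \<and> (0::int) = 0" using rk unfolding rank2_pair_def by blast
  then show False by simp
qed

lemma poly_form:
  fixes g :: "int ^ 'n::finite" and s :: int
  shows "1 + of_int s * grp_elem g = 1 + Poly_Mapping.single g s"
proof -
  have "(of_int s :: 'n grp_ring) = Poly_Mapping.single 0 s"
    using single_of_int[of s] by (metis id_apply of_int_eq_id)
  then show ?thesis by (simp add: grp_elem_def mult_single)
qed

lemma divisor_keys_parallel:
  fixes c :: "'n::finite grp_ring" and g :: "int ^ 'n" and s :: int
  assumes g0: "g \<noteq> 0" and dv: "c dvd 1 + Poly_Mapping.single g s"
    and x: "x \<in> Poly_Mapping.keys c" and y: "y \<in> Poly_Mapping.keys c"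
  shows "\<forall>i j. g$i*(x-y)$j = g$j*(x-y)$i"
proof (intro allI)
  fix i j
  define p where "p = 1 + Poly_Mapping.single g s"
  obtain u where cu: "c * u = p" using dv unfolding p_def by (metis dvd_def)
  have "Poly_Mapping.lookup p 0 = 1"
    using g0 by (simp add: p_def lookup_add lookup_single_not_eq)
  then have p0: "p \<noteq> 0" by auto
  define phi where "phi w = g$i*w$j - g$j*w$i" for w :: "int ^ 'n"
  have lin: "phi (a + b) = phi a + phi b" for a b by (simp add: phi_def algebra_simps)
  have pk: "\<forall>z\<in>Poly_Mapping.keys p. phi z = 0"
  proof
    fix z assume "z \<in> Poly_Mapping.keys p"
    then have "z \<in> {0, g}" unfolding p_def using keys_add[of 1 "Poly_Mapping.single g s"]
      by (auto split: if_splits)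
    then show "phi z = 0" by (auto simp: phi_def mult.commute)
  qed
  have "phi x = phi y" by (rule const_on_keys[OF cu p0 pk lin x y])
  then show "g$i*(x-y)$j = g$j*(x-y)$i" by (simp add: phi_def algebra_simps)
qed


theorem mainTheorem17:
  fixes g h :: "int ^ 'n" and s t :: int
  assumes "rank2_pair g h"
    and "s \<in> {1, -1}" and "t \<in> {1, -1}"
  shows "rel_prime (1 + of_int s * grp_elem g) (1 + of_int t * grp_elem h)"
  unfolding rel_prime_def poly_form
proof (intro allI impI)
  fix c :: "'n grp_ring"
  assume ca: "c dvd 1 + Poly_Mapping.single g s" and cb: "c dvd 1 + Poly_Mapping.single h t"
  have rk: "rank2_pair g h" by fact
  have g0: "g \<noteq> 0"
  proof
    assume "g = 0"
    then have "(1::int) *s g + 0 *s h = 0" by simp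
    then have "(1::int) = 0 \<and> (0::int) = 0" using rk unfolding rank2_pair_def by blast
    then show False by simp
  qed
  have h0: "h \<noteq> 0"
  proof
    assume "h = 0"
    then have "(0::int) *s g + 1 *s h = 0" by simp
    then have "(0::int) = 0 \<and> (1::int) = 0" using rk unfolding rank2_pair_def by blast
    then show False by simp
  qed
  obtain u where cu: "1 + Poly_Mapping.single g s = c * u" using ca by (metis dvd_def)
  have l0: "Poly_Mapping.lookup (c * u) 0 = 1"
    using g0 cu[symmetric] by (simp add: lookup_add lookup_single_not_eq)
  then have c0: "c \<noteq> 0" by auto
  then obtain x where x: "x \<in> Poly_Mapping.keys c" by (metis keys_eq_empty ex_in_conv)
  have allx: "y = x" if y: "y \<in> Poly_Mapping.keys c" for y
  proof -
    have "y - x = 0"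
      by (rule par_zero[OF rk divisor_keys_parallel[OF g0 ca y x] divisor_keys_parallel[OF h0 cb y x]])
    then show ?thesis by simp
  qed
  define m where "m = Poly_Mapping.lookup c x"
  have m0: "m \<noteq> 0" using x by (simp add: m_def in_keys_iff)
  have cform: "c = Poly_Mapping.single x m"
  proof (rule poly_mapping_eqI)
    fix k
    show "Poly_Mapping.lookup c k = Poly_Mapping.lookup (Poly_Mapping.single x m) k"
    proof (cases "k = x")
      case True then show ?thesis by (simp add: m_def)
    next
      case False
      then have "k \<notin> Poly_Mapping.keys c" using allx by blast
      then show ?thesis using False by (simp add: in_keys_iff lookup_single_not_eq)
    qed
  qed
  have "c * u = Poly_Mapping.single 0 m * (Poly_Mapping.single x 1 * u)"
    by (simp add: cform mult.assoc[symmetric] mult_single)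
  then have "Poly_Mapping.lookup (c * u) 0 = m * Poly_Mapping.lookup (Poly_Mapping.single x 1 * u) 0"
    by (simp add: mult_map_scale_conv_mult[symmetric] Poly_Mapping.map.rep_eq when_def)
  then have "1 = m * Poly_Mapping.lookup (Poly_Mapping.single x 1 * u) 0" using l0 by simp
  then have "m dvd 1" by (rule dvdI)
  then have "\<bar>m\<bar> = 1" by (simp only: zdvd1_eq)
  then have mm: "m * m = 1" using abs_mult_self_eq[of m] by simp
  have "1 = c * Poly_Mapping.single (-x) m"
    by (simp add: cform mult_single mm)
  then show "c dvd 1" by (rule dvdI)
qed

end
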